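(* Let $A^\star\in\mathbb{R}^{n\times n}$, $B^\star\in\mathbb{R}^{n\times m}$, $C^\star\in\mathbb{R}^{p\times n}$ with $(A^\star,C^\star)$ observable with observability index $\ell^\star$, let data be generated as in the context and assume $\Delta_{10}\Delta_{10}^\top\preceq\Theta$. If $\sigma_{\min}(S_0S_0^\top)/\sigma_{\max}(\Theta_{22})>4$, then $\Psi_0\Psi_0^\top\succ\Theta_{22}$.
   Context: $\sigma_{\min},\sigma_{\max}$ denote smallest and largest singular values. Let $\ell=\ell^\star$. Data: for $k=0,\dots,T$ ($T\ge\ell$), $x(k+1)=A^\star x(k)+B^\star u(k)$, $y(k)=C^\star x(k)$ from some $x(0)$; $u^{\mathrm m}=u+d^u$, $y^{\mathrm m}=y+d^y$. Matrices with columns $j=0,\dots,T-\ell$: column $j$ of $\Psi_0$ is $(y^{\mathrm m}(j),\dots,y^{\mathrm m}(j+\ell-1),u^{\mathrm m}(j),\dots,u^{\mathrm m}(j+\ell-1))$; of $S_0$ is $(y(j),\dots,y(j+\ell-1),u(j),\dots,u(j+\ell-1))$; of $\Delta_{10}$ is $(d^y(j+\ell),d^y(j),\dots,d^y(j+\ell-1),d^u(j),\dots,d^u(j+\ell-1))$. $\Theta=\Theta^\top\succeq0$ of size $p+p\ell+m\ell$ is given, partitioned as $\begin{bmatrix}\Theta_{11}&\Theta_{12}\\\Theta_{12}^\top&\Theta_{22}\end{bmatrix}$ with $\Theta_{11}\in\mathbb{R}^{p\times p}$. *)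

theory Defs
  imports Complex_Main "Jordan_Normal_Form.Char_Poly" "Jordan_Normal_Form.DL_Rank"
begin

definition sigma_max :: "real mat \<Rightarrow> real" where
  "sigma_max M = sqrt (Max {k. eigenvalue (transpose_mat M * M) k})"

definition sigma_min :: "real mat \<Rightarrow> real" where
  "sigma_min M = sqrt (Min {k. eigenvalue (transpose_mat M * M) k})"

definition loewner_le :: "real mat \<Rightarrow> real mat \<Rightarrow> bool" where
  "loewner_le A B = (\<exists>d. A \<in> carrier_mat d d \<and> B \<in> carrier_mat d d \<and>
      (\<forall>x \<in> carrier_vec d. x \<bullet> ((B - A) *\<^sub>v x) \<ge> 0))"

definition loewner_less :: "real mat \<Rightarrow> real mat \<Rightarrow> bool" where
  "loewner_less A B = (\<exists>d. A \<in> carrier_mat d d \<and> B \<in> carrier_mat d d \<and>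
      (\<forall>x \<in> carrier_vec d. x \<noteq> 0\<^sub>v d \<longrightarrow> x \<bullet> ((B - A) *\<^sub>v x) > 0))"

text \<open>Observability matrix [C; CA; ...; CA^(l-1)] (size (l*p) x n, where C is p x n).\<close>
definition obs_mat :: "real mat \<Rightarrow> real mat \<Rightarrow> nat \<Rightarrow> real mat" where
  "obs_mat A C l = mat (l * dim_row C) (dim_col C)
     (\<lambda>(i, j). (C * A ^\<^sub>m (i div dim_row C)) $$ (i mod dim_row C, j))"

definition mat_rank :: "real mat \<Rightarrow> nat" where
  "mat_rank M = vec_space.rank (dim_row M) M"

definition observable :: "real mat \<Rightarrow> real mat \<Rightarrow> bool" where
  "observable A C = (mat_rank (obs_mat A C (dim_col C)) = dim_col C)"

definition obs_index :: "real mat \<Rightarrow> real mat \<Rightarrow> nat" where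
  "obs_index A C = (LEAST l. mat_rank (obs_mat A C l) = dim_col C)"

text \<open>Stacked data matrices; columns j = 0..T-l.
  Rows: first l blocks of size p (signal w), then l blocks of size m (signal v).\<close>
definition hankel_yu :: "nat \<Rightarrow> nat \<Rightarrow> nat \<Rightarrow> nat \<Rightarrow> (nat \<Rightarrow> real vec) \<Rightarrow> (nat \<Rightarrow> real vec) \<Rightarrow> real mat" where
  "hankel_yu p m l T w v = mat (p * l + m * l) (T - l + 1)
     (\<lambda>(i, j). if i < p * l then w (j + i div p) $ (i mod p)
              else v (j + (i - p * l) div m) $ ((i - p * l) mod m))"

definition delta10 :: "nat \<Rightarrow> nat \<Rightarrow> nat \<Rightarrow> nat \<Rightarrow> (nat \<Rightarrow> real vec) \<Rightarrow> (nat \<Rightarrow> real vec) \<Rightarrow> real mat" where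
  "delta10 p m l T dy du = mat (p + p * l + m * l) (T - l + 1)
     (\<lambda>(i, j). if i < p then dy (j + l) $ i
              else hankel_yu p m l T dy du $$ (i - p, j))"

definition theta22 :: "nat \<Rightarrow> real mat \<Rightarrow> real mat" where
  "theta22 p Th = mat (dim_row Th - p) (dim_col Th - p) (\<lambda>(i, j). Th $$ (i + p, j + p))"

end

theory Submission
  imports Defs "HOL-Analysis.Function_Topology"
begin

definition qf :: "(nat \<Rightarrow> nat \<Rightarrow> real) \<Rightarrow> nat \<Rightarrow> (nat \<Rightarrow> real) \<Rightarrow> real" where
  "qf a d f = (\<Sum>i<d. f i * (\<Sum>j<d. a i j * f j))"

lemma sq_le_sum:
  fixes f :: "nat \<Rightarrow> real"
  assumes "i < d" shows "f i ^ 2 \<le> (\<Sum>k<d. f k ^ 2)"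
  using member_le_sum[of i "{..<d}" "\<lambda>k. f k ^ 2"] assms by auto

lemma exists_min_sphere:
  assumes d: "d > 0"
  shows "\<exists>f0. (\<Sum>i<d. f0 i ^ 2) = 1 \<and> (\<forall>f. (\<Sum>i<d. f i ^ 2) = 1 \<longrightarrow> qf a d f0 \<le> qf a d f)"
proof -
  let ?I = "{..<d}"
  let ?X = "product_topology (\<lambda>_. euclideanreal) ?I"
  let ?K = "PiE ?I (\<lambda>_. {-1..1::real})"
  let ?n = "\<lambda>f. (\<Sum>i<d. f i ^ 2)"
  have proj: "continuous_map ?X euclideanreal (\<lambda>f. f i)" if "i \<in> ?I" for i
    using continuous_map_product_projection[OF that, of "\<lambda>_. euclideanreal"] by simp
  have Kc: "compactin ?X ?K"
    by (subst compactin_PiE) (auto simp: compactin_euclidean_iff)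
  have nc: "continuous_map ?X euclideanreal ?n"
    by (intro continuous_map_sum continuous_map_real_pow proj) auto
  have qc: "continuous_map ?X euclideanreal (qf a d)"
    unfolding qf_def
    by (intro continuous_map_sum continuous_map_real_mult continuous_map_real_mult_left proj) auto
  have Cc: "closedin ?X {f \<in> topspace ?X. ?n f \<in> {1}}"
    by (rule closedin_continuous_map_preimage[OF nc]) auto
  define S where "S = {f \<in> topspace ?X. ?n f \<in> {1}} \<inter> ?K"
  have Sc: "compactin ?X S" unfolding S_def by (rule closed_Int_compactin[OF Cc Kc])
  have "compactin euclideanreal (qf a d ` S)" by (rule image_compactin[OF Sc qc])
  hence cq: "compact (qf a d ` S)" by (simp add: compactin_euclidean_iff)
  define e where "e = restrict (\<lambda>i. if i = 0 then 1 else (0::real)) ?I"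
  have "?n e = (\<Sum>i<d. (if i = 0 then 1 else 0))"
    by (intro sum.cong) (auto simp: e_def)
  also have "\<dots> = 1" using d by (simp add: sum.delta)
  finally have "e \<in> S" unfolding S_def using d by (auto simp: e_def topspace_product_topology)
  hence ne: "qf a d ` S \<noteq> {}" by auto
  from compact_attains_inf[OF cq ne] obtain f0 where f0: "f0 \<in> S" and min: "\<And>g. g \<in> S \<Longrightarrow> qf a d f0 \<le> qf a d g"
    by auto
  have n0: "?n f0 = 1" using f0 unfolding S_def by auto
  show ?thesis
  proof (intro exI conjI allI impI, fact n0)
    fix f :: "nat \<Rightarrow> real" assume nf: "?n f = 1"
    define g where "g = restrict f ?I"
    have qg: "qf a d g = qf a d f" unfolding qf_def g_def by (intro sum.cong) auto
    have ng: "?n g = 1" using nf unfolding g_def by simp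
    have "\<bar>f i\<bar> \<le> 1" if "i < d" for i
    proof -
      have "f i ^ 2 \<le> 1" using sq_le_sum[OF that, of f] nf by simp
      thus ?thesis by (simp add: abs_square_le_1)
    qed
    hence "g \<in> S" unfolding S_def g_def using nf by (auto simp: topspace_product_topology abs_le_iff)
    thus "qf a d f0 \<le> qf a d f" using min qg by metis
  qed
qed

lemma sp_sum: "x \<in> carrier_vec d \<Longrightarrow> y \<in> carrier_vec d \<Longrightarrow> scalar_prod x y = (\<Sum>i<d. x$i * y$i)"
  unfolding scalar_prod_def by (simp add: atLeast0LessThan)

lemma quad_qf:
  fixes M :: "real mat"
  assumes M: "M \<in> carrier_mat d d" and x: "x \<in> carrier_vec d"
  shows "scalar_prod x (M *\<^sub>v x) = qf (\<lambda>i j. M$$(i,j)) d (\<lambda>i. x$i)"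
  unfolding qf_def using M x
  by (subst sp_sum[of _ d]) (auto simp: scalar_prod_def atLeast0LessThan intro!: sum.cong)

lemma self_nonneg: "scalar_prod (x :: real Matrix.vec) x \<ge> 0"
  unfolding scalar_prod_def by (auto intro: sum_nonneg)

lemma self_zero:
  assumes x: "(x :: real Matrix.vec) \<in> carrier_vec d" and z: "scalar_prod x x = 0"
  shows "x = 0\<^sub>v d"
proof -
  have "(\<Sum>i<d. x$i * x$i) = 0" using z sp_sum[OF x x] by simp
  hence "\<forall>i\<in>{..<d}. x$i * x$i = 0" by (subst sum_nonneg_eq_0_iff[symmetric]) auto
  thus ?thesis using x by (intro eq_vecI) auto
qed

lemma qf_scale: "qf a d (\<lambda>i. c * g i) = c^2 * qf a d g"
  unfolding qf_def power2_eq_square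
  by (simp add: sum_distrib_left algebra_simps)

lemma rayleigh_min:
  fixes M :: "real mat"
  assumes M: "M \<in> carrier_mat d d" and sym: "transpose_mat M = M" and d: "0 < d"
  shows "\<exists>\<mu> v. v \<in> carrier_vec d \<and> v \<noteq> 0\<^sub>v d \<and> M *\<^sub>v v = \<mu> \<cdot>\<^sub>v v \<and>
     (\<forall>x\<in>carrier_vec d. \<mu> * scalar_prod x x \<le> scalar_prod x (M *\<^sub>v x))"
proof -
  let ?a = "\<lambda>i j. M$$(i,j)"
  obtain f0 where n0: "(\<Sum>i<d. f0 i ^ 2) = 1"
    and min: "\<And>f. (\<Sum>i<d. f i ^ 2) = 1 \<Longrightarrow> qf ?a d f0 \<le> qf ?a d f"
    using exists_min_sphere[OF d, of ?a] by blast
  define v where "v = vec d f0"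
  define \<mu> where "\<mu> = qf ?a d f0"
  have v: "v \<in> carrier_vec d" unfolding v_def by simp
  have "scalar_prod v v = (\<Sum>i<d. v$i * v$i)" by (rule sp_sum[OF v v])
  also have "\<dots> = (\<Sum>i<d. f0 i ^ 2)" unfolding v_def by (intro sum.cong) (auto simp: power2_eq_square)
  finally have vv: "scalar_prod v v = 1" using n0 by simp
  have "scalar_prod v (M *\<^sub>v v) = qf ?a d (\<lambda>i. v$i)" by (rule quad_qf[OF M v])
  also have "\<dots> = \<mu>" unfolding \<mu>_def qf_def v_def by (intro sum.cong) auto
  finally have vMv: "scalar_prod v (M *\<^sub>v v) = \<mu>" .
  have bound: "\<mu> * scalar_prod x x \<le> scalar_prod x (M *\<^sub>v x)" if x: "x \<in> carrier_vec d" for x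
  proof (cases "scalar_prod x x = 0")
    case True
    hence "x = 0\<^sub>v d" using self_zero[OF x] by simp
    thus ?thesis using M by simp
  next
    case False
    define s where "s = scalar_prod x x"
    have s: "s > 0" using False self_nonneg[of x] unfolding s_def by simp
    define r where "r = sqrt s"
    have r: "r > 0" "r^2 = s" using s unfolding r_def by auto
    define f where "f = (\<lambda>i. (1/r) * x$i)"
    have "(\<Sum>i<d. f i ^ 2) = (1/r)^2 * (\<Sum>i<d. x$i * x$i)"
      unfolding f_def by (simp add: sum_distrib_left power2_eq_square algebra_simps)
    also have "\<dots> = 1" using r s sp_sum[OF x x] unfolding s_def by (simp add: power_divide)
    finally have "\<mu> \<le> qf ?a d f" unfolding \<mu>_def by (rule min)
    also have "qf ?a d f = (1/r)^2 * scalar_prod x (M *\<^sub>v x)"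
      unfolding f_def qf_scale quad_qf[OF M x] ..
    finally have "\<mu> * r^2 \<le> scalar_prod x (M *\<^sub>v x)" using r s
      by (simp add: power_divide divide_simps split: if_splits)
    thus ?thesis using r unfolding s_def by simp
  qed
  define w where "w = M *\<^sub>v v - \<mu> \<cdot>\<^sub>v v"
  have w: "w \<in> carrier_vec d" unfolding w_def using M v by simp
  have Mv: "M *\<^sub>v v \<in> carrier_vec d" "M *\<^sub>v w \<in> carrier_vec d" using M v w by auto
  have symm: "scalar_prod v (M *\<^sub>v w) = scalar_prod w (M *\<^sub>v v)"
  proof -
    have "scalar_prod v (M *\<^sub>v w) = scalar_prod (transpose_mat M *\<^sub>v v) w"
      using transpose_vec_mult_scalar[OF M w v] by simp
    also have "\<dots> = scalar_prod w (M *\<^sub>v v)" using sym comm_scalar_prod[OF Mv(1) w] by simp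
    finally show ?thesis .
  qed
  have wMv: "scalar_prod w (M *\<^sub>v v) - \<mu> * scalar_prod w v = scalar_prod w w"
  proof -
    have "scalar_prod w w = scalar_prod w (M *\<^sub>v v) - scalar_prod w (\<mu> \<cdot>\<^sub>v v)"
      using scalar_prod_minus_distrib[OF w Mv(1), of "\<mu> \<cdot>\<^sub>v v"] v unfolding w_def by simp
    thus ?thesis using w v by simp
  qed
  define c where "c = scalar_prod w (M *\<^sub>v w) - \<mu> * scalar_prod w w"
  have c: "c \<ge> 0" using bound[OF w] unfolding c_def by simp
  define S where "S = scalar_prod w w"
  have S: "S \<ge> 0" unfolding S_def by (rule self_nonneg)
  have key: "0 \<le> 2 * t * S + t^2 * c" for t
  proof -
    define z where "z = v + t \<cdot>\<^sub>v w"
    have z: "z \<in> carrier_vec d" unfolding z_def using v w by simp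
    have e1: "scalar_prod z (M *\<^sub>v z) = scalar_prod v (M *\<^sub>v v) + t * scalar_prod v (M *\<^sub>v w)
        + t * scalar_prod w (M *\<^sub>v v) + t^2 * scalar_prod w (M *\<^sub>v w)"
      unfolding z_def using M v w Mv
      by (simp add: mult_add_distrib_mat_vec mult_mat_vec[OF M w] add_scalar_prod_distrib[of _ d] scalar_prod_add_distrib[of _ d]
          power2_eq_square algebra_simps)
    have e2: "scalar_prod z z = scalar_prod v v + 2 * t * scalar_prod w v + t^2 * scalar_prod w w"
      unfolding z_def using v w
      by (simp add: add_scalar_prod_distrib[of _ d] scalar_prod_add_distrib[of _ d]
          comm_scalar_prod[OF v w] power2_eq_square algebra_simps)
    have "\<mu> * scalar_prod z z \<le> scalar_prod z (M *\<^sub>v z)" by (rule bound[OF z])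
    hence "0 \<le> scalar_prod z (M *\<^sub>v z) - \<mu> * scalar_prod z z" by simp
    also have "scalar_prod z (M *\<^sub>v z) - \<mu> * scalar_prod z z
       = 2 * t * (scalar_prod w (M *\<^sub>v v) - \<mu> * scalar_prod w v) + t^2 * c"
      unfolding e1 e2 symm vMv vv c_def by (simp add: algebra_simps)
    finally show ?thesis unfolding wMv S_def .
  qed
  have "S = 0"
  proof (rule ccontr)
    assume "S \<noteq> 0"
    hence Sp: "S > 0" using S by simp
    define t where "t = -S/(c+1)"
    have tk: "t*(c+1) = -S" using c by (simp add: t_def)
    have "0 \<le> 2 * t * S + t^2 * c" by (rule key)
    hence "0 \<le> (2 * t * S + t^2 * c) * (c+1)^2" by (intro mult_nonneg_nonneg) auto
    also have "\<dots> = 2*(t*(c+1))*S*(c+1) + (t*(c+1))^2*c" by (simp add: power2_eq_square algebra_simps)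
    also have "\<dots> = -(S^2 * (c + 2))" unfolding tk by (simp add: power2_eq_square algebra_simps)
    finally have "0 \<le> -(S^2 * (c + 2))" .
    moreover have "S^2 * (c + 2) > 0" using Sp c by (intro mult_pos_pos) auto
    ultimately show False by linarith
  qed
  hence "w = 0\<^sub>v d" using self_zero[OF w] unfolding S_def by simp
  hence w0: "w = 0\<^sub>v d" .
  have "M *\<^sub>v v = \<mu> \<cdot>\<^sub>v v"
  proof (rule eq_vecI)
    fix i assume i: "i < dim_vec (\<mu> \<cdot>\<^sub>v v)"
    have "w $ i = 0" using w0 i v by simp
    thus "(M *\<^sub>v v) $ i = (\<mu> \<cdot>\<^sub>v v) $ i" using i v Mv unfolding w_def by simp
  qed (use Mv v M in simp)
  moreover have "v \<noteq> 0\<^sub>v d" using vv v by auto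
  ultimately show ?thesis using v bound by blast
qed

lemma eig_finite:
  assumes A: "(A :: real mat) \<in> carrier_mat n n"
  shows "finite {k. eigenvalue A k}"
proof -
  have "char_poly A \<noteq> 0" using degree_monic_char_poly[OF A] by auto
  hence "finite {k. poly (char_poly A) k = 0}" by (rule poly_roots_finite)
  thus ?thesis using eigenvalue_root_char_poly[OF A] by simp
qed

lemma eig_sq:
  fixes M :: "real mat"
  assumes M: "M \<in> carrier_mat d d" and sym: "transpose_mat M = M"
    and v: "v \<in> carrier_vec d" "v \<noteq> 0\<^sub>v d" and Mv: "M *\<^sub>v v = \<mu> \<cdot>\<^sub>v v"
  shows "eigenvalue (transpose_mat M * M) (\<mu>^2)"
proof -
  have "(transpose_mat M * M) *\<^sub>v v = M *\<^sub>v (M *\<^sub>v v)"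
    using sym assoc_mult_mat_vec[OF M M v(1)] by simp
  also have "\<dots> = (\<mu>^2) \<cdot>\<^sub>v v" unfolding Mv mult_mat_vec[OF M v(1)] Mv
    by (simp add: power2_eq_square smult_smult_assoc)
  finally show ?thesis unfolding eigenvalue_def eigenvector_def using v M by auto
qed

lemma sigma_min_le:
  fixes M :: "real mat"
  assumes M: "M \<in> carrier_mat d d" and sym: "transpose_mat M = M"
    and v: "v \<in> carrier_vec d" "v \<noteq> 0\<^sub>v d" and Mv: "M *\<^sub>v v = \<mu> \<cdot>\<^sub>v v" and mu: "\<mu> \<ge> 0"
  shows "sigma_min M \<le> \<mu>"
proof -
  have MM: "transpose_mat M * M \<in> carrier_mat d d" using M by auto
  have "Min {k. eigenvalue (transpose_mat M * M) k} \<le> \<mu>^2"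
    by (rule Min_le[OF eig_finite[OF MM]]) (use eig_sq[OF M sym v Mv] in simp)
  hence "sigma_min M \<le> sqrt (\<mu>^2)" unfolding sigma_min_def by (rule real_sqrt_le_mono)
  thus ?thesis using mu by simp
qed

lemma sigma_max_ge:
  fixes M :: "real mat"
  assumes M: "M \<in> carrier_mat d d" and sym: "transpose_mat M = M"
    and v: "v \<in> carrier_vec d" "v \<noteq> 0\<^sub>v d" and Mv: "M *\<^sub>v v = \<mu> \<cdot>\<^sub>v v"
  shows "\<bar>\<mu>\<bar> \<le> sigma_max M"
proof -
  have MM: "transpose_mat M * M \<in> carrier_mat d d" using M by auto
  have "\<mu>^2 \<le> Max {k. eigenvalue (transpose_mat M * M) k}"
    by (rule Max_ge[OF eig_finite[OF MM]]) (use eig_sq[OF M sym v Mv] in simp)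
  hence "sqrt (\<mu>^2) \<le> sigma_max M" unfolding sigma_max_def by (rule real_sqrt_le_mono)
  thus ?thesis by simp
qed

lemma sum_shift: fixes f :: "nat \<Rightarrow> 'a::comm_monoid_add" and p d :: nat shows "(\<Sum>i<p+d. f i) = (\<Sum>i<p. f i) + (\<Sum>i<d. f (i+p))"
proof -
  have "(\<Sum>i<p+d. f i) = (\<Sum>i\<in>{0..<p}. f i) + (\<Sum>i\<in>{p..<p+d}. f i)"
    by (simp add: lessThan_atLeast0 sum.atLeastLessThan_concat)
  also have "(\<Sum>i\<in>{p..<p+d}. f i) = (\<Sum>i\<in>{0..<d}. f (i+p))"
    using sum.shift_bounds_nat_ivl[of f 0 p d] by (simp add: add.commute)
  finally show ?thesis by (simp add: lessThan_atLeast0)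
qed

lemma mv_sum:
  assumes A: "A \<in> carrier_mat r c" and i: "i < r" and v: "v \<in> carrier_vec c"
  shows "(A *\<^sub>v v) $ i = (\<Sum>j<c. A $$ (i, j) * v $ j)"
  using A i v by (simp add: scalar_prod_def atLeast0LessThan)

lemma quad_AAT:
  fixes A :: "real mat"
  assumes A: "A \<in> carrier_mat r c" and x: "x \<in> carrier_vec r"
  shows "scalar_prod x ((A * transpose_mat A) *\<^sub>v x) = scalar_prod (transpose_mat A *\<^sub>v x) (transpose_mat A *\<^sub>v x)"
proof -
  have At: "transpose_mat A \<in> carrier_mat c r" using A by simp
  have w: "transpose_mat A *\<^sub>v x \<in> carrier_vec c" using At x by simp
  show ?thesis
    unfolding assoc_mult_mat_vec[OF A At x] using transpose_vec_mult_scalar[OF A w x] by simp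
qed

lemma real_ineq1: "(a::real)^2/2 - b^2 \<le> (a+b)^2"
proof -
  have "(a+b)^2 - (a^2/2 - b^2) = (a+2*b)^2/2" by (simp add: power2_eq_square field_simps)
  moreover have "(a+2*b)^2/2 \<ge> 0" by simp
  ultimately show ?thesis by linarith
qed

lemma cs_like:
  fixes s e :: "real Matrix.vec"
  assumes s: "s \<in> carrier_vec N" and e: "e \<in> carrier_vec N"
  shows "scalar_prod s s / 2 - scalar_prod e e \<le> scalar_prod (s + e) (s + e)"
proof -
  have se: "s + e \<in> carrier_vec N" using s e by simp
  have "scalar_prod s s / 2 - scalar_prod e e = (\<Sum>i<N. (s$i)^2/2 - (e$i)^2)"
    unfolding sp_sum[OF s s] sp_sum[OF e e] by (simp add: sum_subtractf sum_divide_distrib power2_eq_square)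
  also have "\<dots> \<le> (\<Sum>i<N. (s$i + e$i)^2)" by (intro sum_mono real_ineq1)
  also have "\<dots> = scalar_prod (s + e) (s + e)" unfolding sp_sum[OF se se] using s e
    by (intro sum.cong) (auto simp: power2_eq_square)
  finally show ?thesis .
qed

lemma div_lt_l: "(i::nat) < p * l \<Longrightarrow> i div p < l"
  by (rule less_mult_imp_div_less) (simp add: mult.commute)

theorem lemma10:
  fixes n m p T l :: nat
    and As Bs Cs Theta :: "real mat"
    and x u y du dy um ym :: "nat \<Rightarrow> real vec"
  assumes As: "As \<in> carrier_mat n n" and Bs: "Bs \<in> carrier_mat n m" and Cs: "Cs \<in> carrier_mat p n"
    and obs: "observable As Cs"
    and l_def: "l = obs_index As Cs"
    and T: "T \<ge> l"
    and dims: "\<And>k. k \<le> T + 1 \<Longrightarrow> x k \<in> carrier_vec n"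
      "\<And>k. k \<le> T \<Longrightarrow> u k \<in> carrier_vec m"
      "\<And>k. k \<le> T \<Longrightarrow> du k \<in> carrier_vec m"
      "\<And>k. k \<le> T \<Longrightarrow> dy k \<in> carrier_vec p"
    and dyn: "\<And>k. k \<le> T \<Longrightarrow> x (k + 1) = As *\<^sub>v x k + Bs *\<^sub>v u k"
    and outp: "\<And>k. k \<le> T \<Longrightarrow> y k = Cs *\<^sub>v x k"
    and meas_u: "\<And>k. k \<le> T \<Longrightarrow> um k = u k + du k"
    and meas_y: "\<And>k. k \<le> T \<Longrightarrow> ym k = y k + dy k"
    and Theta: "Theta \<in> carrier_mat (p + p * l + m * l) (p + p * l + m * l)"
    and Theta_sym: "transpose_mat Theta = Theta"
    and Theta_psd: "loewner_le (0\<^sub>m (p + p * l + m * l) (p + p * l + m * l)) Theta"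
    and noise: "loewner_le (delta10 p m l T dy du * transpose_mat (delta10 p m l T dy du)) Theta"
    and ratio: "sigma_min (hankel_yu p m l T y u * transpose_mat (hankel_yu p m l T y u))
                 / sigma_max (theta22 p Theta) > 4"
  shows "loewner_less (theta22 p Theta)
           (hankel_yu p m l T ym um * transpose_mat (hankel_yu p m l T ym um))"
proof -
  define d where "d = p * l + m * l"
  define N where "N = T - l + 1"
  define H where "H = hankel_yu p m l T y u"
  define Hm where "Hm = hankel_yu p m l T ym um"
  define D where "D = hankel_yu p m l T dy du"
  define Dl where "Dl = delta10 p m l T dy du"
  define Th where "Th = theta22 p Theta"
  have H: "H \<in> carrier_mat d N" unfolding H_def hankel_yu_def d_def N_def by (simp add: mult.commute)
  have Hm: "Hm \<in> carrier_mat d N" unfolding Hm_def hankel_yu_def d_def N_def by (simp add: mult.commute)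
  have D: "D \<in> carrier_mat d N" unfolding D_def hankel_yu_def d_def N_def by (simp add: mult.commute)
  have Dl: "Dl \<in> carrier_mat (p + d) N" unfolding Dl_def delta10_def d_def N_def by (simp add: mult.commute add.assoc)
  have Th: "Th \<in> carrier_mat d d" unfolding Th_def theta22_def d_def using Theta by simp
  have Th_sym: "transpose_mat Th = Th"
  proof (rule eq_matI)
    fix i j assume "i < dim_row Th" "j < dim_col Th"
    hence ij: "i < d" "j < d" using Th by auto
    have "Theta $$ (j + p, i + p) = transpose_mat Theta $$ (i + p, j + p)"
      using ij Theta unfolding d_def by simp
    also have "\<dots> = Theta $$ (i + p, j + p)" using Theta_sym by simp
    finally show "transpose_mat Th $$ (i, j) = Th $$ (i, j)"
      using ij Th unfolding Th_def theta22_def using Theta by (simp add: d_def)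
  qed (use Th in auto)
  have ycar: "y k \<in> carrier_vec p" if "k \<le> T" for k
    using outp[OF that] dims(1)[of k] that Cs by simp
  have HmHD: "Hm = H + D"
  proof (rule eq_matI)
    fix i j assume "i < dim_row (H + D)" "j < dim_col (H + D)"
    hence ij: "i < d" "j < N" using H D by auto
    show "Hm $$ (i, j) = (H + D) $$ (i, j)"
    proof (cases "i < p * l")
      case True
      have k: "j + i div p \<le> T" using div_lt_l[OF True] ij(2) T unfolding N_def by linarith
      have r: "i mod p < p" using True by (cases "p = 0") auto
      have add: "(y (j + i div p) + dy (j + i div p)) $ (i mod p) = y (j + i div p) $ (i mod p) + dy (j + i div p) $ (i mod p)"
        using ycar[OF k] dims(4)[OF k] r by simp
      show ?thesis using ij H D True
        by (simp add: Hm_def H_def D_def hankel_yu_def d_def N_def meas_y[OF k] add)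
    next
      case False
      have i': "i - p * l < m * l" using ij(1) False unfolding d_def by linarith
      have k: "j + (i - p * l) div m \<le> T" using div_lt_l[OF i'] ij(2) T unfolding N_def by linarith
      have r: "(i - p * l) mod m < m" using i' by (cases "m = 0") auto
      have add: "(u (j + (i - p * l) div m) + du (j + (i - p * l) div m)) $ ((i - p * l) mod m)
         = u (j + (i - p * l) div m) $ ((i - p * l) mod m) + du (j + (i - p * l) div m) $ ((i - p * l) mod m)"
        using dims(2)[OF k] dims(3)[OF k] r by simp
      show ?thesis using ij H D False
        by (simp add: Hm_def H_def D_def hankel_yu_def d_def N_def meas_u[OF k] add)
    qed
  qed (use H D Hm in auto)
  have HmT: "Hm * transpose_mat Hm \<in> carrier_mat d d" using Hm by simp
  show ?thesis
    unfolding loewner_less_def Th_def[symmetric] Hm_def[symmetric]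
  proof (intro exI[of _ d] conjI ballI impI Th HmT)
    fix x :: "real Matrix.vec" assume x: "x \<in> carrier_vec d" and x0: "x \<noteq> 0\<^sub>v d"
    have dpos: "0 < d"
    proof (rule ccontr)
      assume "\<not> 0 < d"
      hence "d = 0" by simp
      hence "x = 0\<^sub>v d" using x by (intro eq_vecI) auto
      thus False using x0 by simp
    qed
    have X: "scalar_prod x x > 0" using self_nonneg[of x] self_zero[OF x] x0
      by (cases "scalar_prod x x = 0") auto
    define z where "z = vec (p + d) (\<lambda>i. if i < p then 0 else x $ (i - p))"
    have z: "z \<in> carrier_vec (p + d)" unfolding z_def by simp
    have zi: "z $ i = 0" if "i < p" for i using that unfolding z_def by simp
    have zi2: "z $ (i + p) = x $ i" if "i < d" for i using that unfolding z_def by simp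
    have Theta': "Theta \<in> carrier_mat (p + d) (p + d)" using Theta unfolding d_def by (simp add: add.assoc)
    have claim1: "scalar_prod z (Theta *\<^sub>v z) = scalar_prod x (Th *\<^sub>v x)"
    proof -
      have Tz: "(Theta *\<^sub>v z) $ (i + p) = (Th *\<^sub>v x) $ i" if i: "i < d" for i
      proof -
        have "(Theta *\<^sub>v z) $ (i + p) = (\<Sum>j<p+d. Theta $$ (i+p, j) * z $ j)"
          using i by (simp add: mv_sum[OF Theta' _ z])
        also have "\<dots> = (\<Sum>j<d. Theta $$ (i+p, j+p) * x $ j)"
          by (simp add: sum_shift zi zi2)
        also have "\<dots> = (Th *\<^sub>v x) $ i"
          unfolding mv_sum[OF Th i x] using Theta i
          by (intro sum.cong) (auto simp: Th_def theta22_def d_def)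
        finally show ?thesis .
      qed
      have "scalar_prod z (Theta *\<^sub>v z) = (\<Sum>i<p+d. z $ i * (Theta *\<^sub>v z) $ i)"
        using z Theta' by (simp add: sp_sum[of _ "p+d"])
      also have "\<dots> = (\<Sum>i<d. x $ i * (Th *\<^sub>v x) $ i)"
        by (simp add: sum_shift zi zi2 Tz)
      also have "\<dots> = scalar_prod x (Th *\<^sub>v x)" using x Th by (simp add: sp_sum[of _ d])
      finally show ?thesis .
    qed
    have claim2: "transpose_mat Dl *\<^sub>v z = transpose_mat D *\<^sub>v x"
    proof (rule eq_vecI)
      fix j assume "j < dim_vec (transpose_mat D *\<^sub>v x)"
      hence j: "j < N" using D by simp
      have "(transpose_mat Dl *\<^sub>v z) $ j = (\<Sum>i<p+d. Dl $$ (i, j) * z $ i)"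
        using mv_sum[OF _ j z, of "transpose_mat Dl"] j Dl by (auto intro!: sum.cong)
      also have "\<dots> = (\<Sum>i<d. Dl $$ (i + p, j) * x $ i)"
        by (simp add: sum_shift zi zi2)
      also have "\<dots> = (\<Sum>i<d. D $$ (i, j) * x $ i)"
        using j by (intro sum.cong) (auto simp: Dl_def D_def delta10_def d_def N_def)
      also have "\<dots> = (transpose_mat D *\<^sub>v x) $ j"
        using mv_sum[OF _ j x, of "transpose_mat D"] j D by (auto intro!: sum.cong)
      finally show "(transpose_mat Dl *\<^sub>v z) $ j = (transpose_mat D *\<^sub>v x) $ j" .
    qed (use Dl D in simp)
    have noise22: "scalar_prod (transpose_mat D *\<^sub>v x) (transpose_mat D *\<^sub>v x) \<le> scalar_prod x (Th *\<^sub>v x)"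
    proof -
      from noise obtain d' where c1: "Dl * transpose_mat Dl \<in> carrier_mat d' d'"
        and c2: "Theta \<in> carrier_mat d' d'"
        and psd: "\<forall>z\<in>carrier_vec d'. 0 \<le> scalar_prod z ((Theta - Dl * transpose_mat Dl) *\<^sub>v z)"
        unfolding loewner_le_def Dl_def by blast
      have d': "d' = p + d" using c2 Theta' by auto
      have DD: "Dl * transpose_mat Dl \<in> carrier_mat (p + d) (p + d)" using Dl by simp
      have "0 \<le> scalar_prod z ((Theta - Dl * transpose_mat Dl) *\<^sub>v z)" using psd z d' by auto
      also have "\<dots> = scalar_prod z (Theta *\<^sub>v z) - scalar_prod z ((Dl * transpose_mat Dl) *\<^sub>v z)"
        using minus_mult_distrib_mat_vec[OF Theta' DD z] scalar_prod_minus_distrib[OF z, of "Theta *\<^sub>v z" "(Dl * transpose_mat Dl) *\<^sub>v z"] Theta' DD z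
        by simp
      also have "\<dots> = scalar_prod x (Th *\<^sub>v x) - scalar_prod (transpose_mat D *\<^sub>v x) (transpose_mat D *\<^sub>v x)"
        unfolding claim1 quad_AAT[OF Dl z] claim2 ..
      finally show ?thesis by simp
    qed
    define M where "M = H * transpose_mat H"
    have M: "M \<in> carrier_mat d d" unfolding M_def using H by simp
    have M_sym: "transpose_mat M = M" unfolding M_def
      using transpose_mult[OF H, of "transpose_mat H" d] H by simp
    obtain \<mu> v where v: "v \<in> carrier_vec d" "v \<noteq> 0\<^sub>v d" and Mv: "M *\<^sub>v v = \<mu> \<cdot>\<^sub>v v"
      and mub: "\<forall>x\<in>carrier_vec d. \<mu> * scalar_prod x x \<le> scalar_prod x (M *\<^sub>v x)"
      using rayleigh_min[OF M M_sym dpos] by blast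
    have "\<mu> \<ge> 0"
    proof -
      have vv: "scalar_prod v v > 0" using self_nonneg[of v] self_zero[OF v(1)] v(2)
        by (cases "scalar_prod v v = 0") auto
      have "scalar_prod v (M *\<^sub>v v) = \<mu> * scalar_prod v v" using Mv v by simp
      moreover have "scalar_prod v (M *\<^sub>v v) \<ge> 0" unfolding M_def quad_AAT[OF H v(1)]
        by (rule self_nonneg)
      ultimately show ?thesis using vv by (simp add: zero_le_mult_iff)
    qed
    have a_le: "sigma_min M \<le> \<mu>" by (rule sigma_min_le[OF M M_sym v Mv \<open>\<mu> \<ge> 0\<close>])
    have nTh: "- Th \<in> carrier_mat d d" using Th by simp
    have nTh_sym: "transpose_mat (- Th) = - Th" using Th_sym by (simp add: transpose_uminus)
    obtain \<nu> w where w: "w \<in> carrier_vec d" "w \<noteq> 0\<^sub>v d" and Tw: "(- Th) *\<^sub>v w = \<nu> \<cdot>\<^sub>v w"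
      and nub: "\<forall>x\<in>carrier_vec d. \<nu> * scalar_prod x x \<le> scalar_prod x ((- Th) *\<^sub>v x)"
      using rayleigh_min[OF nTh nTh_sym dpos] by blast
    have Tw': "Th *\<^sub>v w = (- \<nu>) \<cdot>\<^sub>v w"
    proof (rule eq_vecI)
      fix i assume i: "i < dim_vec ((- \<nu>) \<cdot>\<^sub>v w)"
      have "((- Th) *\<^sub>v w) $ i = (\<nu> \<cdot>\<^sub>v w) $ i" using Tw by simp
      thus "(Th *\<^sub>v w) $ i = ((- \<nu>) \<cdot>\<^sub>v w) $ i" using i w Th by simp
    qed (use w Th in simp)
    have b_ge': "\<bar>- \<nu>\<bar> \<le> sigma_max Th" by (rule sigma_max_ge[OF Th Th_sym w Tw'])
    hence b_ge: "- \<nu> \<le> sigma_max Th" and b_nn: "sigma_max Th \<ge> 0" by auto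
    have tb: "scalar_prod x (Th *\<^sub>v x) \<le> sigma_max Th * scalar_prod x x"
    proof -
      have "\<nu> * scalar_prod x x \<le> scalar_prod x ((- Th) *\<^sub>v x)" using nub x by blast
      also have "\<dots> = - scalar_prod x (Th *\<^sub>v x)" using x Th by simp
      finally have "scalar_prod x (Th *\<^sub>v x) \<le> (- \<nu>) * scalar_prod x x" by simp
      also have "\<dots> \<le> sigma_max Th * scalar_prod x x"
        using b_ge X by (intro mult_right_mono) auto
      finally show ?thesis .
    qed
    define a where "a = sigma_min M"
    define b where "b = sigma_max Th"
    have b0: "b \<ge> 0" unfolding b_def by (rule b_nn)
    have rat: "a / b > 4" using ratio unfolding a_def b_def M_def H_def Th_def .
    have bpos: "b > 0" using rat b0 by (cases "b = 0") auto
    have ab: "a > 4 * b" using rat bpos by (simp add: pos_less_divide_eq mult.commute)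
    define sv where "sv = transpose_mat H *\<^sub>v x"
    define ev where "ev = transpose_mat D *\<^sub>v x"
    have sv: "sv \<in> carrier_vec N" unfolding sv_def using H x by simp
    have ev: "ev \<in> carrier_vec N" unfolding ev_def using D x by simp
    have HmTx: "transpose_mat Hm *\<^sub>v x = sv + ev"
      unfolding HmHD sv_def ev_def transpose_add[OF H D]
      by (rule add_mult_distrib_mat_vec) (use H D x in auto)
    have ss: "scalar_prod sv sv \<ge> a * scalar_prod x x"
    proof -
      have "a * scalar_prod x x \<le> \<mu> * scalar_prod x x"
        using a_le X unfolding a_def by (intro mult_right_mono) auto
      also have "\<dots> \<le> scalar_prod x (M *\<^sub>v x)" using mub x by blast
      also have "\<dots> = scalar_prod sv sv" unfolding M_def quad_AAT[OF H x] sv_def ..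
      finally show ?thesis .
    qed
    have ee: "scalar_prod ev ev \<le> b * scalar_prod x x" using noise22 tb unfolding ev_def b_def by linarith
    have t_le: "scalar_prod x (Th *\<^sub>v x) \<le> b * scalar_prod x x" using tb unfolding b_def .
    have "4 * b * scalar_prod x x < a * scalar_prod x x" using ab X by simp
    have cs: "scalar_prod sv sv / 2 - scalar_prod ev ev \<le> scalar_prod (sv + ev) (sv + ev)"
      by (rule cs_like[OF sv ev])
    have main: "scalar_prod x (Th *\<^sub>v x) < scalar_prod (sv + ev) (sv + ev)"
      using cs ss ee t_le \<open>4 * b * scalar_prod x x < a * scalar_prod x x\<close> by linarith
    have "scalar_prod x ((Hm * transpose_mat Hm - Th) *\<^sub>v x)
        = scalar_prod x ((Hm * transpose_mat Hm) *\<^sub>v x) - scalar_prod x (Th *\<^sub>v x)"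
      using minus_mult_distrib_mat_vec[OF HmT Th x] scalar_prod_minus_distrib[OF x, of "(Hm * transpose_mat Hm) *\<^sub>v x" "Th *\<^sub>v x"] HmT Th x
      by simp
    also have "scalar_prod x ((Hm * transpose_mat Hm) *\<^sub>v x) = scalar_prod (sv + ev) (sv + ev)"
      unfolding quad_AAT[OF Hm x] HmTx ..
    finally show "0 < scalar_prod x ((Hm * transpose_mat Hm - Th) *\<^sub>v x)" using main by simp
  qed
qed

end
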